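(* Let $G$ be a prime $\{P_5,\overline{P_5}\}$-free graph and $v\in V(G)$. (1) If $v$ is antisimplicial and $u$ is a vertex non-adjacent to $v$ chosen so that $|N(u)\cap N(v)|$ is minimum among all vertices non-adjacent to $v$, then $u$ is simplicial. (2) If $v$ is simplicial and $u$ is a vertex adjacent to $v$ chosen so that $|N(u)\cup N(v)|$ is maximum among all neighbors of $v$, then $u$ is antisimplicial.
   Context: All graphs are finite and simple. $N(x)$ is the set of neighbors of $x$. $P_5$ is the path on five vertices and $\overline{P_5}$ its complement; $G$ is $H$-free if it has no induced subgraph isomorphic to $H$. A vertex $b\notin X$ is mixed on $X$ if it has both a neighbor and a non-neighbor in $X$. A homogeneous set is a set $X\subseteq V(G)$ with $1<|X|<|V(G)|$ such that no vertex outside $X$ is mixed on $X$. $G$ is prime if $|V(G)|\ge4$ and has no homogeneous set. A vertex $v$ is simplicial if $N(v)$ is a clique, antisimplicial if $V(G)\setminus N(v)$ is a stable set. *)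

theory Defs
  imports Main
begin

definition graph :: "'a set \<Rightarrow> ('a \<Rightarrow> 'a \<Rightarrow> bool) \<Rightarrow> bool" where
  "graph V E \<longleftrightarrow> finite V \<and> (\<forall>x y. E x y \<longrightarrow> x \<in> V \<and> y \<in> V)
     \<and> (\<forall>x y. E x y \<longrightarrow> E y x) \<and> (\<forall>x. \<not> E x x)"

definition nbhd :: "'a set \<Rightarrow> ('a \<Rightarrow> 'a \<Rightarrow> bool) \<Rightarrow> 'a \<Rightarrow> 'a set" where
  "nbhd V E x = {y \<in> V. E x y}"

definition has_induced_P5 :: "'a set \<Rightarrow> ('a \<Rightarrow> 'a \<Rightarrow> bool) \<Rightarrow> bool" where
  "has_induced_P5 V E \<longleftrightarrow> (\<exists>a\<in>V. \<exists>b\<in>V. \<exists>c\<in>V. \<exists>d\<in>V. \<exists>e\<in>V.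
     distinct [a, b, c, d, e] \<and>
     E a b \<and> E b c \<and> E c d \<and> E d e \<and>
     \<not> E a c \<and> \<not> E a d \<and> \<not> E a e \<and> \<not> E b d \<and> \<not> E b e \<and> \<not> E c e)"

definition has_induced_coP5 :: "'a set \<Rightarrow> ('a \<Rightarrow> 'a \<Rightarrow> bool) \<Rightarrow> bool" where
  "has_induced_coP5 V E \<longleftrightarrow> (\<exists>a\<in>V. \<exists>b\<in>V. \<exists>c\<in>V. \<exists>d\<in>V. \<exists>e\<in>V.
     distinct [a, b, c, d, e] \<and>
     \<not> E a b \<and> \<not> E b c \<and> \<not> E c d \<and> \<not> E d e \<and>
     E a c \<and> E a d \<and> E a e \<and> E b d \<and> E b e \<and> E c e)"

definition mixed :: "'a set \<Rightarrow> ('a \<Rightarrow> 'a \<Rightarrow> bool) \<Rightarrow> 'a \<Rightarrow> 'a set \<Rightarrow> bool" where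
  "mixed V E b X \<longleftrightarrow> b \<notin> X \<and> (\<exists>x\<in>X. E b x) \<and> (\<exists>y\<in>X. \<not> E b y)"

definition homogeneous :: "'a set \<Rightarrow> ('a \<Rightarrow> 'a \<Rightarrow> bool) \<Rightarrow> 'a set \<Rightarrow> bool" where
  "homogeneous V E X \<longleftrightarrow> X \<subseteq> V \<and> 1 < card X \<and> card X < card V \<and>
     (\<forall>b\<in>V - X. \<not> mixed V E b X)"

definition prime_graph :: "'a set \<Rightarrow> ('a \<Rightarrow> 'a \<Rightarrow> bool) \<Rightarrow> bool" where
  "prime_graph V E \<longleftrightarrow> card V \<ge> 4 \<and> \<not> (\<exists>X. homogeneous V E X)"

definition simplicial :: "'a set \<Rightarrow> ('a \<Rightarrow> 'a \<Rightarrow> bool) \<Rightarrow> 'a \<Rightarrow> bool" where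
  "simplicial V E v \<longleftrightarrow> (\<forall>x\<in>nbhd V E v. \<forall>y\<in>nbhd V E v. x \<noteq> y \<longrightarrow> E x y)"

definition antisimplicial :: "'a set \<Rightarrow> ('a \<Rightarrow> 'a \<Rightarrow> bool) \<Rightarrow> 'a \<Rightarrow> bool" where
  "antisimplicial V E v \<longleftrightarrow> (\<forall>x\<in>V - nbhd V E v. \<forall>y\<in>V - nbhd V E v. \<not> E x y)"

end

theory Submission
  imports Defs
begin

lemma part1:
  assumes G: "graph V E" and P: "prime_graph V E" and nP5: "\<not> has_induced_P5 V E"
    and nH: "\<not> has_induced_coP5 V E"
    and vV: "v \<in> V" and anti: "antisimplicial V E v" and uV: "u \<in> V" and uv: "u \<noteq> v"
    and nuv: "\<not> E u v"
    and minc: "\<forall>w. w \<in> V \<and> w \<noteq> v \<and> \<not> E w v \<longrightarrow>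
       card (nbhd V E u \<inter> nbhd V E v) \<le> card (nbhd V E w \<inter> nbhd V E v)"
  shows "simplicial V E u"
proof (rule ccontr)
  assume "\<not> simplicial V E u"
  then obtain x y where x: "x \<in> nbhd V E u" and y: "y \<in> nbhd V E u" and xy: "x \<noteq> y"
    and nxy: "\<not> E x y" unfolding simplicial_def by blast
  have fin: "finite V" and Ein: "\<And>a b. E a b \<Longrightarrow> a \<in> V \<and> b \<in> V"
    and Esym: "\<And>a b. E a b \<Longrightarrow> E b a" and Eirr: "\<And>a. \<not> E a a"
    using G unfolding graph_def by auto
  have stab: "\<And>a b. a \<in> V \<Longrightarrow> b \<in> V \<Longrightarrow> \<not> E v a \<Longrightarrow> \<not> E v b \<Longrightarrow> \<not> E a b"
    using anti unfolding antisimplicial_def nbhd_def by blast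
  have subN: "\<And>a. a \<in> V \<Longrightarrow> \<not> E v a \<Longrightarrow> nbhd V E a \<subseteq> nbhd V E v"
    using stab unfolding nbhd_def by blast
  have nvu: "\<not> E v u" using nuv Esym by blast
  have Nu: "nbhd V E u \<subseteq> nbhd V E v" using subN uV nvu by blast
  have finN: "\<And>a. finite (nbhd V E a)" using fin unfolding nbhd_def by auto
  define R where "R = (\<lambda>p q. p \<in> nbhd V E u \<and> q \<in> nbhd V E u \<and> \<not> E p q \<and> p \<noteq> q)"
  have Rsym: "\<And>p q. R p q \<Longrightarrow> R q p" unfolding R_def using Esym by blast
  define K where "K = {w. R\<^sup>*\<^sup>* x w}"
  have KN: "K \<subseteq> nbhd V E u"
  proof
    fix w assume "w \<in> K"
    then have "R\<^sup>*\<^sup>* x w" unfolding K_def by simp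
    then show "w \<in> nbhd V E u"
      by (induction rule: rtranclp_induct) (use x R_def in auto)
  qed
  have xK: "x \<in> K" unfolding K_def by simp
  have yK: "y \<in> K" unfolding K_def using x y xy nxy R_def by (simp add: r_into_rtranclp)
  have propK: "\<And>b w. R\<^sup>*\<^sup>* x w \<Longrightarrow> (\<And>p q. R p q \<Longrightarrow> (E b p \<longleftrightarrow> E b q)) \<Longrightarrow> (E b w \<longleftrightarrow> E b x)"
  proof -
    fix b w assume "R\<^sup>*\<^sup>* x w" and st: "\<And>p q. R p q \<Longrightarrow> (E b p \<longleftrightarrow> E b q)"
    then show "E b w \<longleftrightarrow> E b x"
      by (induction rule: rtranclp_induct) (use st in blast)+
  qed
  have house: "\<And>a b c d e. a \<in> V \<Longrightarrow> b \<in> V \<Longrightarrow> c \<in> V \<Longrightarrow> d \<in> V \<Longrightarrow> e \<in> V \<Longrightarrow>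
     distinct [a, b, c, d, e] \<Longrightarrow>
     \<not> E a b \<Longrightarrow> \<not> E b c \<Longrightarrow> \<not> E c d \<Longrightarrow> \<not> E d e \<Longrightarrow>
     E a c \<Longrightarrow> E a d \<Longrightarrow> E a e \<Longrightarrow> E b d \<Longrightarrow> E b e \<Longrightarrow> E c e \<Longrightarrow> False"
    using nH unfolding has_induced_coP5_def by blast
  have p5: "\<And>a b c d e. a \<in> V \<Longrightarrow> b \<in> V \<Longrightarrow> c \<in> V \<Longrightarrow> d \<in> V \<Longrightarrow> e \<in> V \<Longrightarrow>
     distinct [a, b, c, d, e] \<Longrightarrow>
     E a b \<Longrightarrow> E b c \<Longrightarrow> E c d \<Longrightarrow> E d e \<Longrightarrow>
     \<not> E a c \<Longrightarrow> \<not> E a d \<Longrightarrow> \<not> E a e \<Longrightarrow> \<not> E b d \<Longrightarrow> \<not> E b e \<Longrightarrow> \<not> E c e \<Longrightarrow> False"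
    using nP5 unfolding has_induced_P5_def by blast
  have houseB: "\<And>b p q. b \<in> nbhd V E v \<Longrightarrow> b \<notin> nbhd V E u \<Longrightarrow> R p q \<Longrightarrow> E b p \<Longrightarrow> \<not> E b q \<Longrightarrow> False"
  proof -
    fix b p q assume b1: "b \<in> nbhd V E v" and b2: "b \<notin> nbhd V E u" and r: "R p q"
      and bp: "E b p" and bq: "\<not> E b q"
    have p: "p \<in> nbhd V E u" and q: "q \<in> nbhd V E u" and pq: "\<not> E p q" "p \<noteq> q"
      using r R_def by auto
    have pv: "p \<in> nbhd V E v" and qv: "q \<in> nbhd V E v" using p q Nu by auto
    show False
      apply (rule house[of v u b q p])
      using b1 b2 p q pv qv pq bp bq uV vV uv nuv nvu Eirr Esym unfolding nbhd_def by auto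
  qed
  have stepB: "\<And>b p q. b \<in> nbhd V E v \<Longrightarrow> b \<notin> nbhd V E u \<Longrightarrow> R p q \<Longrightarrow> (E b p \<longleftrightarrow> E b q)"
    using houseB Rsym by blast
  have stepA: "\<And>b p q. b \<in> V \<Longrightarrow> \<not> E v b \<Longrightarrow> b \<noteq> v \<Longrightarrow> b \<noteq> u \<Longrightarrow> R p q \<Longrightarrow> E b p \<Longrightarrow> \<not> E b q \<Longrightarrow> False"
  proof -
    fix b p q assume bV: "b \<in> V" and nvb: "\<not> E v b" and bv: "b \<noteq> v" and bu: "b \<noteq> u"
      and r: "R p q" and bp: "E b p" and bq: "\<not> E b q"
    have p: "p \<in> nbhd V E u" and q: "q \<in> nbhd V E u" and pq: "\<not> E p q" "p \<noteq> q"
      using r R_def by auto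
    have pv: "p \<in> nbhd V E v" and qv: "q \<in> nbhd V E v" using p q Nu by auto
    have Nb: "nbhd V E b \<subseteq> nbhd V E v" using subN bV nvb by blast
    have "\<not> nbhd V E b \<subseteq> nbhd V E u"
    proof
      assume sub: "nbhd V E b \<subseteq> nbhd V E u"
      have "q \<notin> nbhd V E b" using bq unfolding nbhd_def by auto
      then have "nbhd V E b \<subset> nbhd V E u" using sub q by blast
      then have lt: "card (nbhd V E b) < card (nbhd V E u)" using finN psubset_card_mono by blast
      have "card (nbhd V E u \<inter> nbhd V E v) \<le> card (nbhd V E b \<inter> nbhd V E v)"
        using minc bV bv nvb Esym by blast
      moreover have "nbhd V E u \<inter> nbhd V E v = nbhd V E u" using Nu by blast
      moreover have "nbhd V E b \<inter> nbhd V E v = nbhd V E b" using Nb by blast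
      ultimately show False using lt by simp
    qed
    then obtain z where zb: "z \<in> nbhd V E b" and zu: "z \<notin> nbhd V E u" by blast
    have zv: "z \<in> nbhd V E v" using zb Nb by blast
    have nub: "\<not> E u b" using stab uV bV nvu nvb by blast
    have Ezq: "E z q"
    proof (rule ccontr)
      assume nzq: "\<not> E z q"
      show False
        apply (rule p5[of u q v z b])
        using zb zu zv p q pv qv nzq bq bV uV vV uv nuv nvu nvb nub bv bu Eirr Esym
        unfolding nbhd_def by auto
    qed
    have Ezp: "E z p" using stepB[OF zv zu r] Ezq by blast
    show False
      apply (rule house[of z u b q p])
      using zb zu zv p q pv qv Ezp Ezq pq bp bq bV uV vV uv nuv nvu nvb nub bv bu Eirr Esym
      unfolding nbhd_def by auto
  qed
  have notmixed: "\<And>b. b \<in> V - K \<Longrightarrow> \<not> mixed V E b K"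
  proof -
    fix b assume b: "b \<in> V - K"
    show "\<not> mixed V E b K"
    proof (cases "b = u \<or> b = v \<or> b \<in> nbhd V E u")
      case True
      have "\<forall>p\<in>K. E b p"
      proof
        fix p assume pK: "p \<in> K"
        then have pu: "p \<in> nbhd V E u" using KN by blast
        show "E b p"
        proof (rule ccontr)
          assume nbp: "\<not> E b p"
          show False
          proof (cases "b = u \<or> b = v")
            case True then show False using pu Nu nbp unfolding nbhd_def by auto
          next
            case False
            then have bu: "b \<in> nbhd V E u" using \<open>b = u \<or> b = v \<or> b \<in> nbhd V E u\<close> by blast
            have "R p b" unfolding R_def using pu bu nbp Esym b pK by blast
            then have "R\<^sup>*\<^sup>* x b" using pK unfolding K_def by (simp add: rtranclp.rtrancl_into_rtrancl)
            then show False using b unfolding K_def by simp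
          qed
        qed
      qed
      then show ?thesis unfolding mixed_def by blast
    next
      case False
      have step: "\<And>p q. R p q \<Longrightarrow> (E b p \<longleftrightarrow> E b q)"
      proof -
        fix p q assume r: "R p q"
        show "E b p \<longleftrightarrow> E b q"
        proof (cases "b \<in> nbhd V E v")
          case True then show ?thesis using stepB[OF True _ r] False by blast
        next
          case nb: False
          have "\<not> E v b" using nb b unfolding nbhd_def by auto
          then show ?thesis using stepA[of b p q] stepA[of b q p] r Rsym b False by blast
        qed
      qed
      have "\<forall>w\<in>K. (E b w \<longleftrightarrow> E b x)" using propK step unfolding K_def by blast
      then show ?thesis unfolding mixed_def by blast
    qed
  qed
  have KV: "K \<subseteq> V" using KN unfolding nbhd_def by auto
  have finK: "finite K" using KV fin finite_subset by blast
  have "card {x, y} \<le> card K" using xK yK finK by (intro card_mono) auto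
  then have c1: "1 < card K" using xy by simp
  have "u \<notin> K" using KN Eirr unfolding nbhd_def by auto
  then have "K \<subset> V" using KV uV by blast
  then have c2: "card K < card V" using fin psubset_card_mono by blast
  have "homogeneous V E K" unfolding homogeneous_def using KV c1 c2 notmixed by blast
  then show False using P unfolding prime_graph_def by blast
qed

definition compl :: "'a set \<Rightarrow> ('a \<Rightarrow> 'a \<Rightarrow> bool) \<Rightarrow> 'a \<Rightarrow> 'a \<Rightarrow> bool" where
  "compl V E = (\<lambda>x y. x \<in> V \<and> y \<in> V \<and> x \<noteq> y \<and> \<not> E x y)"

lemma compl_graph: "graph V E \<Longrightarrow> graph V (compl V E)"
  unfolding graph_def compl_def by auto

lemma compl_mixed: "graph V E \<Longrightarrow> X \<subseteq> V \<Longrightarrow> b \<in> V - X \<Longrightarrow> mixed V (compl V E) b X = mixed V E b X"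
  unfolding mixed_def compl_def by blast

lemma compl_prime: "graph V E \<Longrightarrow> prime_graph V E \<Longrightarrow> prime_graph V (compl V E)"
proof -
  assume G: "graph V E" and P: "prime_graph V E"
  have "\<And>X. homogeneous V (compl V E) X \<Longrightarrow> homogeneous V E X"
    unfolding homogeneous_def using compl_mixed[OF G] by blast
  then show ?thesis using P unfolding prime_graph_def by blast
qed

lemma compl_P5: "\<not> has_induced_coP5 V E \<Longrightarrow> \<not> has_induced_P5 V (compl V E)"
proof
  assume n: "\<not> has_induced_coP5 V E" and "has_induced_P5 V (compl V E)"
  then obtain a b c d e where H: "a \<in> V" "b \<in> V" "c \<in> V" "d \<in> V" "e \<in> V"
    "distinct [a, b, c, d, e]" "compl V E a b" "compl V E b c" "compl V E c d" "compl V E d e"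
    "\<not> compl V E a c" "\<not> compl V E a d" "\<not> compl V E a e" "\<not> compl V E b d"
    "\<not> compl V E b e" "\<not> compl V E c e"
    unfolding has_induced_P5_def by blast
  have "has_induced_coP5 V E" unfolding has_induced_coP5_def
    apply (rule bexI[of _ a], rule bexI[of _ b], rule bexI[of _ c], rule bexI[of _ d], rule bexI[of _ e])
    using H by (simp_all add: compl_def)
  then show False using n by blast
qed

lemma compl_coP5: "graph V E \<Longrightarrow> \<not> has_induced_P5 V E \<Longrightarrow> \<not> has_induced_coP5 V (compl V E)"
proof
  assume n: "\<not> has_induced_P5 V E" and "has_induced_coP5 V (compl V E)"
  then obtain a b c d e where H: "a \<in> V" "b \<in> V" "c \<in> V" "d \<in> V" "e \<in> V"
    "distinct [a, b, c, d, e]" "\<not> compl V E a b" "\<not> compl V E b c" "\<not> compl V E c d" "\<not> compl V E d e"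
    "compl V E a c" "compl V E a d" "compl V E a e" "compl V E b d"
    "compl V E b e" "compl V E c e"
    unfolding has_induced_coP5_def by blast
  have "has_induced_P5 V E" unfolding has_induced_P5_def
    apply (rule bexI[of _ a], rule bexI[of _ b], rule bexI[of _ c], rule bexI[of _ d], rule bexI[of _ e])
    using H by (simp_all add: compl_def)
  then show False using n by blast
qed

lemma compl_nbhd: "x \<in> V \<Longrightarrow> nbhd V (compl V E) x = V - nbhd V E x - {x}"
  unfolding nbhd_def compl_def by auto

lemma compl_simp_anti: "graph V E \<Longrightarrow> v \<in> V \<Longrightarrow> simplicial V E v \<Longrightarrow> antisimplicial V (compl V E) v"
proof -
  assume G: "graph V E" and vV: "v \<in> V" and s: "simplicial V E v"
  have sym: "\<And>a b. E a b \<Longrightarrow> E b a" using G unfolding graph_def by blast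
  show ?thesis unfolding antisimplicial_def compl_nbhd[OF vV]
  proof (intro ballI)
    fix x y assume x: "x \<in> V - (V - nbhd V E v - {v})" and y: "y \<in> V - (V - nbhd V E v - {v})"
    have "x = y \<or> E x y"
    proof (cases "x = y")
      case False
      have xs: "x \<in> nbhd V E v \<or> x = v" and ys: "y \<in> nbhd V E v \<or> y = v" using x y by auto
      show ?thesis
      proof (cases "x = v")
        case True then show ?thesis using ys False unfolding nbhd_def by auto
      next
        case xv: False
        show ?thesis
        proof (cases "y = v")
          case True then show ?thesis using xs xv sym unfolding nbhd_def by auto
        next
          case yv: False
          then show ?thesis using s xs ys xv False unfolding simplicial_def by blast
        qed
      qed
    qed simp
    then show "\<not> compl V E x y" unfolding compl_def by blast
  qed
qed

lemma compl_simp_anti2: "graph V E \<Longrightarrow> v \<in> V \<Longrightarrow> simplicial V (compl V E) v \<Longrightarrow> antisimplicial V E v"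
proof -
  assume G: "graph V E" and vV: "v \<in> V" and s: "simplicial V (compl V E) v"
  have sym: "\<And>a b. E a b \<Longrightarrow> E b a" and irr: "\<And>a. \<not> E a a" using G unfolding graph_def by blast+
  show ?thesis unfolding antisimplicial_def
  proof (intro ballI)
    fix x y assume x: "x \<in> V - nbhd V E v" and y: "y \<in> V - nbhd V E v"
    show "\<not> E x y"
    proof (cases "x = y")
      case True then show ?thesis using irr by simp
    next
      case False
      show ?thesis
      proof (cases "x = v")
        case True then show ?thesis using y unfolding nbhd_def by auto
      next
        case xv: False
        show ?thesis
        proof (cases "y = v")
          case True then show ?thesis using x sym unfolding nbhd_def by auto
        next
          case yv: False
          have "x \<in> nbhd V (compl V E) v" "y \<in> nbhd V (compl V E) v"
            using x y xv yv compl_nbhd[OF vV] by auto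
          then have "compl V E x y" using s False unfolding simplicial_def by blast
          then show ?thesis unfolding compl_def by blast
        qed
      qed
    qed
  qed
qed

lemma compl_int: "graph V E \<Longrightarrow> E w v \<Longrightarrow>
   nbhd V (compl V E) w \<inter> nbhd V (compl V E) v = V - (nbhd V E w \<union> nbhd V E v)"
  unfolding nbhd_def compl_def graph_def by auto

lemma compl_card: "graph V E \<Longrightarrow> E w v \<Longrightarrow>
   card (nbhd V (compl V E) w \<inter> nbhd V (compl V E) v) = card V - card (nbhd V E w \<union> nbhd V E v)"
  apply (subst compl_int, assumption+)
  apply (rule card_Diff_subset)
   apply (unfold graph_def nbhd_def; auto intro: finite_subset)
  apply (auto simp: nbhd_def)
  done

theorem lemma2p9:
  fixes V :: "'a set" and E :: "'a \<Rightarrow> 'a \<Rightarrow> bool" and v :: 'a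
  assumes "graph V E"
    and "prime_graph V E"
    and "\<not> has_induced_P5 V E"
    and "\<not> has_induced_coP5 V E"
    and "v \<in> V"
  shows "(antisimplicial V E v \<longrightarrow>
           (\<forall>u. u \<in> V \<and> u \<noteq> v \<and> \<not> E u v \<and>
              (\<forall>w. w \<in> V \<and> w \<noteq> v \<and> \<not> E w v \<longrightarrow>
                  card (nbhd V E u \<inter> nbhd V E v) \<le> card (nbhd V E w \<inter> nbhd V E v))
              \<longrightarrow> simplicial V E u))
       \<and> (simplicial V E v \<longrightarrow>
           (\<forall>u. u \<in> V \<and> E u v \<and>
              (\<forall>w. w \<in> V \<and> E w v \<longrightarrow>
                  card (nbhd V E w \<union> nbhd V E v) \<le> card (nbhd V E u \<union> nbhd V E v))
              \<longrightarrow> antisimplicial V E u))"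
proof (intro conjI impI allI)
  fix u assume "antisimplicial V E v" and
    "u \<in> V \<and> u \<noteq> v \<and> \<not> E u v \<and>
              (\<forall>w. w \<in> V \<and> w \<noteq> v \<and> \<not> E w v \<longrightarrow>
                  card (nbhd V E u \<inter> nbhd V E v) \<le> card (nbhd V E w \<inter> nbhd V E v))"
  then show "simplicial V E u" using part1[OF assms] by blast
next
  fix u assume sv: "simplicial V E v" and
    h: "u \<in> V \<and> E u v \<and>
              (\<forall>w. w \<in> V \<and> E w v \<longrightarrow>
                  card (nbhd V E w \<union> nbhd V E v) \<le> card (nbhd V E u \<union> nbhd V E v))"
  have G: "graph V E" by fact
  let ?C = "compl V E"
  have uv: "u \<noteq> v" using h G unfolding graph_def by auto
  have ncuv: "\<not> ?C u v" using h unfolding compl_def by auto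
  have minc: "\<forall>w. w \<in> V \<and> w \<noteq> v \<and> \<not> ?C w v \<longrightarrow>
       card (nbhd V ?C u \<inter> nbhd V ?C v) \<le> card (nbhd V ?C w \<inter> nbhd V ?C v)"
  proof (intro allI impI)
    fix w assume w: "w \<in> V \<and> w \<noteq> v \<and> \<not> ?C w v"
    then have Ewv: "E w v" using assms(5) unfolding compl_def by auto
    have le: "card (nbhd V E w \<union> nbhd V E v) \<le> card (nbhd V E u \<union> nbhd V E v)" using h w Ewv by blast
    show "card (nbhd V ?C u \<inter> nbhd V ?C v) \<le> card (nbhd V ?C w \<inter> nbhd V ?C v)"
      using le compl_card[OF G Ewv] compl_card[OF G] h by simp
  qed
  have "simplicial V ?C u"
    using part1[OF compl_graph[OF G] compl_prime[OF G assms(2)] compl_P5[OF assms(4)]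
        compl_coP5[OF G assms(3)] assms(5) compl_simp_anti[OF G assms(5) sv]] h uv ncuv minc by blast
  then show "antisimplicial V E u" using compl_simp_anti2[OF G] h by blast
qed

end
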